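(* Work in the real projective plane. Let $ABC$ be a triangle and let $\psi$ denote isogonal conjugation with respect to $ABC$. Let $l_1, l_2$ be two lines, and let $\mathcal{C}_1 = \psi(l_1)$, $\mathcal{C}_2 = \psi(l_2)$ be the circumconics of $ABC$ obtained as their images. Let $X, Y$ be two points on $l_1$ and put $X' = \psi(X)$, $Y' = \psi(Y)$. If $X$ and $Y$ are conjugate with respect to $\mathcal{C}_2$, then the line $X'Y'$ passes through the pole of $l_2$ with respect to $\mathcal{C}_1$.
   Context: Under isogonal conjugation with respect to a triangle, a line is transformed into a conic through the three vertices (a circumconic) and vice versa. Two points $U, V$ are conjugate with respect to a conic $\mathcal{C}$ if the polar of $U$ with respect to $\mathcal{C}$ passes through $V$ (equivalently, the polar of $V$ passes through $U$). *)

theory Defs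
  imports "HOL-Analysis.Analysis" "HOL-Analysis.Cross3"
begin

text \<open>Real projective plane: points and lines are nonzero vectors of real^3
(homogeneous coordinates), up to nonzero scalars.\<close>

definition hom :: "real^2 \<Rightarrow> real^3" where
  "hom p = vector [p$1, p$2, 1]"

definition proj_eq :: "real^3 \<Rightarrow> real^3 \<Rightarrow> bool" where
  "proj_eq P Q \<longleftrightarrow> P \<noteq> 0 \<and> Q \<noteq> 0 \<and> (\<exists>c::real. c \<noteq> 0 \<and> P = c *\<^sub>R Q)"

definition on_line :: "real^3 \<Rightarrow> real^3 \<Rightarrow> bool" where
  "on_line P l \<longleftrightarrow> P \<noteq> 0 \<and> l \<bullet> P = 0"

definition trimat :: "real^2 \<Rightarrow> real^2 \<Rightarrow> real^2 \<Rightarrow> real^3^3" where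
  "trimat A B C = transpose (vector [hom A, hom B, hom C])"

definition bary :: "real^2 \<Rightarrow> real^2 \<Rightarrow> real^2 \<Rightarrow> real^3 \<Rightarrow> real^3" where
  "bary A B C P = matrix_inv (trimat A B C) *v P"

text \<open>Isogonal conjugation: in barycentrics (x:y:z) \<mapsto> (a^2 y z : b^2 z x : c^2 x y).\<close>
definition isog :: "real^2 \<Rightarrow> real^2 \<Rightarrow> real^2 \<Rightarrow> real^3 \<Rightarrow> real^3" where
  "isog A B C P =
     (let w = bary A B C P in
      trimat A B C *v vector [ (dist B C)\<^sup>2 * (w$2) * (w$3),
                               (dist C A)\<^sup>2 * (w$3) * (w$1),
                               (dist A B)\<^sup>2 * (w$1) * (w$2) ])"

definition on_conic :: "real^3^3 \<Rightarrow> real^3 \<Rightarrow> bool" where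
  "on_conic M P \<longleftrightarrow> P \<noteq> 0 \<and> P \<bullet> (M *v P) = 0"

definition is_isog_image :: "real^2 \<Rightarrow> real^2 \<Rightarrow> real^2 \<Rightarrow> real^3 \<Rightarrow> real^3^3 \<Rightarrow> bool" where
  "is_isog_image A B C l M \<longleftrightarrow> transpose M = M \<and>
     (\<forall>P. on_conic M P \<longleftrightarrow> (\<exists>X. on_line X l \<and> proj_eq P (isog A B C X)))"

definition conjugate_wrt :: "real^3^3 \<Rightarrow> real^3 \<Rightarrow> real^3 \<Rightarrow> bool" where
  "conjugate_wrt M U V \<longleftrightarrow> V \<bullet> (M *v U) = 0"

definition is_pole :: "real^3^3 \<Rightarrow> real^3 \<Rightarrow> real^3 \<Rightarrow> bool" where
  "is_pole M P l \<longleftrightarrow> P \<noteq> 0 \<and> M *v P \<noteq> 0 \<and> proj_eq (M *v P) l"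

text \<open>P lies on the line through U and V (whose coordinates are U \<times> V).\<close>
definition on_join :: "real^3 \<Rightarrow> real^3 \<Rightarrow> real^3 \<Rightarrow> bool" where
  "on_join U V P \<longleftrightarrow> cross3 U V \<bullet> P = 0"

end

theory Submission
  imports Defs
begin


lemma trimat_mv: "trimat A B C *v w = w$1 *\<^sub>R hom A + w$2 *\<^sub>R hom B + w$3 *\<^sub>R hom C"
  by (simp add: trimat_def vec_eq_iff forall_3 matrix_vector_mult_def sum_3 transpose_def hom_def algebra_simps)

lemma det_trimat: "det (trimat A B C) = (B$1 - A$1) * (C$2 - A$2) - (B$2 - A$2) * (C$1 - A$1)"
  by (simp add: trimat_def det_3 transpose_def hom_def algebra_simps)

lemma forall_2': "(\<forall>i::2. P i) \<longleftrightarrow> P 1 \<and> P 2"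
  by (metis exhaust_2)

lemma det_trimat_nz:
  assumes "\<not> collinear {A, B, C}"
  shows "det (trimat A B C) \<noteq> 0"
proof
  assume h: "det (trimat A B C) = 0"
  define d where "d = B - A"
  define e where "e = C - A"
  have h': "d$1 * e$2 - d$2 * e$1 = 0" using h by (simp add: det_trimat d_def e_def)
  have "collinear {0, d, e}"
    unfolding collinear_lemma
  proof (cases "d = 0")
    case True then show "d = 0 \<or> e = 0 \<or> (\<exists>c. e = c *\<^sub>R d)" by simp
  next
    case False
    then have "d$1 \<noteq> 0 \<or> d$2 \<noteq> 0" by (simp add: vec_eq_iff forall_2')
    then have "\<exists>c. e = c *\<^sub>R d"
    proof
      assume "d$1 \<noteq> 0"
      then have "e = (e$1 / d$1) *\<^sub>R d" using h'
        by (simp add: vec_eq_iff forall_2' field_simps)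
      then show ?thesis by blast
    next
      assume "d$2 \<noteq> 0"
      then have "e = (e$2 / d$2) *\<^sub>R d" using h'
        by (simp add: vec_eq_iff forall_2' field_simps) 
      then show ?thesis by blast
    qed
    then show "d = 0 \<or> e = 0 \<or> (\<exists>c. e = c *\<^sub>R d)" by blast
  qed
  moreover have "collinear {A, B, C} = collinear {0, d, e}"
  proof -
    have "{A, B, C} = {B, A, C}" by auto
    then show ?thesis using collinear_3[of B A C] by (simp add: d_def e_def)
  qed
  ultimately show False using assms by simp
qed


lemma trimat_inv:
  assumes "\<not> collinear {A, B, C}"
  shows "trimat A B C *v (matrix_inv (trimat A B C) *v P) = P"
    and "matrix_inv (trimat A B C) *v (trimat A B C *v w) = w"
proof -
  have "invertible (trimat A B C)" using det_trimat_nz[OF assms] invertible_det_nz by blast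
  then have "trimat A B C ** matrix_inv (trimat A B C) = mat 1 \<and> matrix_inv (trimat A B C) ** trimat A B C = mat 1"
    unfolding invertible_def matrix_inv_def by (rule someI_ex)
  then show "trimat A B C *v (matrix_inv (trimat A B C) *v P) = P"
    and "matrix_inv (trimat A B C) *v (trimat A B C *v w) = w"
    by (simp_all add: matrix_vector_mul_assoc)
qed

definition iso :: "real^2 \<Rightarrow> real^2 \<Rightarrow> real^2 \<Rightarrow> real^3 \<Rightarrow> real^3" where
  "iso A B C w = vector [(dist B C)\<^sup>2 * w$2 * w$3, (dist C A)\<^sup>2 * w$3 * w$1, (dist A B)\<^sup>2 * w$1 * w$2]"

lemma isog_eq: "isog A B C P = trimat A B C *v iso A B C (bary A B C P)"
  by (simp add: isog_def iso_def Let_def)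

lemma isog_T:
  assumes "\<not> collinear {A, B, C}"
  shows "isog A B C (trimat A B C *v w) = trimat A B C *v iso A B C w"
  using trimat_inv(2)[OF assms] by (simp add: isog_eq bary_def)

lemma trimat_zero:
  assumes "\<not> collinear {A, B, C}" "trimat A B C *v w = 0"
  shows "w = 0"
  using trimat_inv(2)[OF assms(1), of w] assms(2) by simp

lemma dot_T: "l \<bullet> (trimat A B C *v w) = w$1 * (l \<bullet> hom A) + w$2 * (l \<bullet> hom B) + w$3 * (l \<bullet> hom C)"
  by (simp add: trimat_mv inner_add_right)

lemma sym_form:
  assumes "transpose M = M"
  shows "x \<bullet> (M *v y) = y \<bullet> (M *v (x::real^3))"
proof -
  have "x \<bullet> (M *v y) = (x v* M) \<bullet> y" by (simp add: dot_lmul_matrix)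
  also have "\<dots> = (transpose M *v x) \<bullet> y" by simp
  finally show ?thesis using assms by (simp add: inner_commute)
qed

lemma bil_T:
  "(trimat A B C *v a) \<bullet> (M *v (trimat A B C *v b)) =
     a$1*b$1*(hom A \<bullet> (M *v hom A)) + a$1*b$2*(hom A \<bullet> (M *v hom B)) + a$1*b$3*(hom A \<bullet> (M *v hom C)) +
     a$2*b$1*(hom B \<bullet> (M *v hom A)) + a$2*b$2*(hom B \<bullet> (M *v hom B)) + a$2*b$3*(hom B \<bullet> (M *v hom C)) +
     a$3*b$1*(hom C \<bullet> (M *v hom A)) + a$3*b$2*(hom C \<bullet> (M *v hom B)) + a$3*b$3*(hom C \<bullet> (M *v hom C))"
  by (simp add: trimat_mv matrix_vector_right_distrib matrix_vector_mult_scaleR inner_add_left inner_add_right algebra_simps)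

lemma hom_nz: "hom A \<noteq> 0"
  by (simp add: hom_def vec_eq_iff forall_3)

lemma cross_T:
  "cross3 (T *v a) (T *v b) \<bullet> (T *v c) = det T * (cross3 a b \<bullet> c)"
proof -
  have "cross3 (T *v a) (T *v b) \<bullet> (T *v c) = (cross3 (T *v a) (T *v b) v* T) \<bullet> c"
    by (simp add: dot_lmul_matrix)
  also have "\<dots> = (transpose T *v cross3 (T *v a) (T *v b)) \<bullet> c" by simp
  also have "\<dots> = det T * (cross3 a b \<bullet> c)" by (simp only: cross_matrix_mult inner_scaleR_left)
  finally show ?thesis .
qed



definition qf :: "real \<Rightarrow> real \<Rightarrow> real \<Rightarrow> real \<Rightarrow> real \<Rightarrow> real \<Rightarrow> real^3 \<Rightarrow> real" where
  "qf n11 n22 n33 n12 n13 n23 q = q$1*q$1*n11 + q$2*q$2*n22 + q$3*q$3*n33 + 2*q$1*q$2*n12 + 2*q$1*q$3*n13 + 2*q$2*q$3*n23"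

lemma alg_conic:
  fixes a b c :: real and u :: "real^3"
  assumes nz: "u$1 \<noteq> 0" "u$2 \<noteq> 0" "u$3 \<noteq> 0" "a \<noteq> 0" "b \<noteq> 0" "c \<noteq> 0"
  and H: "\<And>w. u \<bullet> w = 0 \<Longrightarrow> w \<noteq> 0 \<Longrightarrow> vector[a*w$2*w$3, b*w$3*w$1, c*w$1*w$2] \<noteq> (0::real^3) \<Longrightarrow>
          qf n11 n22 n33 n12 n13 n23 (vector[a*w$2*w$3, b*w$3*w$1, c*w$1*w$2]) = 0"
  shows "n11 = 0 \<and> n22 = 0 \<and> n33 = 0 \<and> (\<exists>\<mu>. n23 = \<mu>*a*u$1 \<and> n13 = \<mu>*b*u$2 \<and> n12 = \<mu>*c*u$3)"
proof -
  obtain u1 u2 u3 where u: "u$1 = u1" "u$2 = u2" "u$3 = u3" by blast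
  have dot: "u \<bullet> vector [p,q,r] = u1*p + u2*q + u3*r" for p q r
    by (simp add: inner_vec_def sum_3 u)
  have nzv: "(vector [p,q,r]::real^3) \<noteq> 0 \<longleftrightarrow> p \<noteq> 0 \<or> q \<noteq> 0 \<or> r \<noteq> 0" for p q r
    by (simp add: vec_eq_iff forall_3)
  note nz' = nz[unfolded u]
  have h1: "qf n11 n22 n33 n12 n13 n23 (vector[a*u3*(-u2), 0, 0]) = 0"
    using H[of "vector[0,u3,-u2]"] nz' by (simp add: dot nzv algebra_simps)
  have h2: "qf n11 n22 n33 n12 n13 n23 (vector[0, b*(-u1)*u3, 0]) = 0"
    using H[of "vector[u3,0,-u1]"] nz' by (simp add: dot nzv algebra_simps)
  have h3: "qf n11 n22 n33 n12 n13 n23 (vector[0, 0, c*u2*(-u1)]) = 0"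
    using H[of "vector[u2,-u1,0]"] nz' by (simp add: dot nzv algebra_simps)
  have d1: "n11 = 0" using h1 nz' by (simp add: qf_def)
  have d2: "n22 = 0" using h2 nz' by (simp add: qf_def)
  have d3: "n33 = 0" using h3 nz' by (simp add: qf_def)
  have h4: "qf n11 n22 n33 n12 n13 n23 (vector[a*(u1*u3)*(-2*u1*u2), b*(-2*u1*u2)*(u2*u3), c*(u2*u3)*(u1*u3)]) = 0"
    using H[of "vector[u2*u3,u1*u3,-2*u1*u2]"] nz' by (simp add: dot nzv algebra_simps)
  have h5: "qf n11 n22 n33 n12 n13 n23 (vector[a*(u1*u3)*(u1*u2), b*(u1*u2)*(-2*u2*u3), c*(-2*u2*u3)*(u1*u3)]) = 0"
    using H[of "vector[-2*u2*u3,u1*u3,u1*u2]"] nz' by (simp add: dot nzv algebra_simps)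
  define X where "X = a*b*u1*u2*n12"
  define Y where "Y = a*c*u1*u3*n13"
  define Z where "Z = b*c*u2*u3*n23"
  have P: "(u1*u2*u3)^2 \<noteq> 0" using nz' by simp
  have e4: "(u1*u2*u3)^2 * (2*(4*X - 2*Y - 2*Z)) = 0"
    using h4 d1 d2 d3 unfolding qf_def X_def Y_def Z_def by (simp add: power2_eq_square algebra_simps)
  have e5: "(u1*u2*u3)^2 * (2*(-2*X - 2*Y + 4*Z)) = 0"
    using h5 d1 d2 d3 unfolding qf_def X_def Y_def Z_def by (simp add: power2_eq_square algebra_simps)
  have "4*X - 2*Y - 2*Z = 0" using e4 P by simp
  moreover have "-2*X - 2*Y + 4*Z = 0" using e5 P by simp
  ultimately have XY: "X = Y" and ZY: "Z = Y" by linarith+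
  define \<mu> where "\<mu> = n13 / (b*u2)"
  have "n13 = \<mu>*b*u2" using nz' by (simp add: \<mu>_def)
  moreover have "n12 = \<mu>*c*u3" using XY nz' unfolding X_def Y_def \<mu>_def
    by (simp add: field_simps)
  moreover have "n23 = \<mu>*a*u1" using ZY nz' unfolding Z_def Y_def \<mu>_def
    by (simp add: field_simps)
  ultimately show ?thesis using d1 d2 d3 u by auto
qed



lemma alg_key_poly:
  fixes a b c u1 u2 u3 x1 x2 x3 y1 y2 y3 px py pz :: real
  assumes "u1*x1 + u2*x2 + u3*x3 = 0" "u1*y1 + u2*y2 + u3*y3 = 0"
  shows "2*u1*(((b*x3*x1)*(c*y1*y2) - (c*x1*x2)*(b*y3*y1))*px + ((c*x1*x2)*(a*y2*y3) - (a*x2*x3)*(c*y1*y2))*py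
              + ((a*x2*x3)*(b*y3*y1) - (b*x3*x1)*(a*y2*y3))*pz)
       = (x2*y3 - x3*y2) * (c*(b*u2*px + a*u1*py)*(y1*x2+y2*x1) + b*(c*u3*px + a*u1*pz)*(y1*x3+y3*x1) + a*(c*u3*py + b*u2*pz)*(y2*x3+y3*x2))"
  using assms by algebra


lemma quad_T:
  assumes "transpose M = M"
  shows "(trimat A B C *v q) \<bullet> (M *v (trimat A B C *v q)) =
    qf (hom A \<bullet> (M *v hom A)) (hom B \<bullet> (M *v hom B)) (hom C \<bullet> (M *v hom C))
       (hom A \<bullet> (M *v hom B)) (hom A \<bullet> (M *v hom C)) (hom B \<bullet> (M *v hom C)) q"
  using sym_form[OF assms, of "hom B" "hom A"] sym_form[OF assms, of "hom C" "hom A"] sym_form[OF assms, of "hom C" "hom B"]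
  by (simp add: bil_T qf_def algebra_simps)

lemma vert_nz:
  assumes "\<not> on_line (hom A) l"
  shows "l \<bullet> hom A \<noteq> 0"
  using assms hom_nz by (simp add: on_line_def)

lemma dist_nz:
  assumes "\<not> collinear {A, B, C}"
  shows "dist B C \<noteq> 0" "dist C A \<noteq> 0" "dist A B \<noteq> 0"
  using assms by (auto simp: collinear_2 insert_commute)

lemma conic_shape:
  assumes tri: "\<not> collinear {A, B, C}"
    and nz: "l \<bullet> hom A \<noteq> 0" "l \<bullet> hom B \<noteq> 0" "l \<bullet> hom C \<noteq> 0"
    and img: "is_isog_image A B C l M"
  shows "hom A \<bullet> (M *v hom A) = 0 \<and> hom B \<bullet> (M *v hom B) = 0 \<and> hom C \<bullet> (M *v hom C) = 0 \<and>
     (\<exists>\<mu>. hom B \<bullet> (M *v hom C) = \<mu>*(dist B C)\<^sup>2*(l \<bullet> hom A) \<and>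
          hom A \<bullet> (M *v hom C) = \<mu>*(dist C A)\<^sup>2*(l \<bullet> hom B) \<and>
          hom A \<bullet> (M *v hom B) = \<mu>*(dist A B)\<^sup>2*(l \<bullet> hom C))"
proof -
  define u where "u = (vector [l \<bullet> hom A, l \<bullet> hom B, l \<bullet> hom C] :: real^3)"
  have symM: "transpose M = M" using img by (simp add: is_isog_image_def)
  have H: "qf (hom A \<bullet> (M *v hom A)) (hom B \<bullet> (M *v hom B)) (hom C \<bullet> (M *v hom C))
       (hom A \<bullet> (M *v hom B)) (hom A \<bullet> (M *v hom C)) (hom B \<bullet> (M *v hom C))
       (vector[(dist B C)\<^sup>2*w$2*w$3, (dist C A)\<^sup>2*w$3*w$1, (dist A B)\<^sup>2*w$1*w$2]) = 0"
    if w: "u \<bullet> w = 0" "w \<noteq> 0" "vector[(dist B C)\<^sup>2*w$2*w$3, (dist C A)\<^sup>2*w$3*w$1, (dist A B)\<^sup>2*w$1*w$2] \<noteq> (0::real^3)" for w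
  proof -
    define X where "X = trimat A B C *v w"
    have X0: "X \<noteq> 0" using trimat_zero[OF tri, of w] w(2) X_def by metis
    have "l \<bullet> X = w$1 * (l \<bullet> hom A) + w$2 * (l \<bullet> hom B) + w$3 * (l \<bullet> hom C)"
      by (simp only: X_def dot_T)
    also have "\<dots> = u \<bullet> w" by (simp add: u_def inner_vec_def sum_3 algebra_simps)
    finally have "l \<bullet> X = u \<bullet> w" .
    then have onl: "on_line X l" using X0 w(1) by (simp add: on_line_def)
    have iX: "isog A B C X = trimat A B C *v iso A B C w" using isog_T[OF tri] X_def by simp
    define P0 where "P0 = trimat A B C *v iso A B C w"
    have P00: "P0 \<noteq> 0" using trimat_zero[OF tri, of "iso A B C w"] w(3) by (auto simp: P0_def iso_def)
    have "proj_eq P0 (isog A B C X)" using P00 iX by (auto simp: proj_eq_def P0_def intro: exI[of _ 1])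
    then have "on_conic M P0" using img onl unfolding is_isog_image_def by blast
    then have "P0 \<bullet> (M *v P0) = 0" by (simp add: on_conic_def)
    then show ?thesis unfolding P0_def quad_T[OF symM] by (simp add: iso_def)
  qed
  have u123: "u$1 \<noteq> 0" "u$2 \<noteq> 0" "u$3 \<noteq> 0" using nz by (simp_all add: u_def)
  have "dist B C ^ 2 \<noteq> 0" "dist C A ^ 2 \<noteq> 0" "dist A B ^ 2 \<noteq> 0" using dist_nz[OF tri] by simp_all
  from alg_conic[OF u123 this H] show ?thesis by (simp add: u_def)
qed


theorem proposition3p3:
  fixes A B C :: "real^2" and l1 l2 X Y :: "real^3" and M1 M2 :: "real^3^3"
  assumes tri: "\<not> collinear {A, B, C}"
    and l1: "l1 \<noteq> 0" and l2: "l2 \<noteq> 0"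
    and l1_vert: "\<not> on_line (hom A) l1" "\<not> on_line (hom B) l1" "\<not> on_line (hom C) l1"
    and l2_vert: "\<not> on_line (hom A) l2" "\<not> on_line (hom B) l2" "\<not> on_line (hom C) l2"
    and C1: "is_isog_image A B C l1 M1"
    and C2: "is_isog_image A B C l2 M2"
    and X: "on_line X l1" and Y: "on_line Y l1"
    and conj: "conjugate_wrt M2 X Y"
  shows "\<forall>P. is_pole M1 P l2 \<longrightarrow> on_join (isog A B C X) (isog A B C Y) P"
proof (intro allI impI)
  fix P assume pole: "is_pole M1 P l2"
  define T where "T = trimat A B C"
  define Ti where "Ti = matrix_inv T"
  define a where "a = (dist B C)\<^sup>2"
  define b where "b = (dist C A)\<^sup>2"
  define c where "c = (dist A B)\<^sup>2"
  have abc: "a \<noteq> 0" "b \<noteq> 0" "c \<noteq> 0" using dist_nz[OF tri] by (simp_all add: a_def b_def c_def)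
  define u1 where "u1 = l1 \<bullet> hom A"
  define u2 where "u2 = l1 \<bullet> hom B"
  define u3 where "u3 = l1 \<bullet> hom C"
  define t1v where "t1v = l2 \<bullet> hom A"
  define t2v where "t2v = l2 \<bullet> hom B"
  define t3v where "t3v = l2 \<bullet> hom C"
  have unz: "u1 \<noteq> 0" "u2 \<noteq> 0" "u3 \<noteq> 0" using vert_nz l1_vert by (auto simp: u1_def u2_def u3_def)
  have snz: "t1v \<noteq> 0" "t2v \<noteq> 0" "t3v \<noteq> 0" using vert_nz l2_vert by (auto simp: t1v_def t2v_def t3v_def)
  obtain \<mu>1 where sh1:
    "hom A \<bullet> (M1 *v hom A) = 0" "hom B \<bullet> (M1 *v hom B) = 0" "hom C \<bullet> (M1 *v hom C) = 0"
    "hom B \<bullet> (M1 *v hom C) = \<mu>1*a*u1" "hom A \<bullet> (M1 *v hom C) = \<mu>1*b*u2" "hom A \<bullet> (M1 *v hom B) = \<mu>1*c*u3"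
    using conic_shape[OF tri unz[unfolded u1_def u2_def u3_def] C1] unfolding a_def b_def c_def u1_def u2_def u3_def
    by blast
  obtain \<mu>2 where sh2:
    "hom A \<bullet> (M2 *v hom A) = 0" "hom B \<bullet> (M2 *v hom B) = 0" "hom C \<bullet> (M2 *v hom C) = 0"
    "hom B \<bullet> (M2 *v hom C) = \<mu>2*a*t1v" "hom A \<bullet> (M2 *v hom C) = \<mu>2*b*t2v" "hom A \<bullet> (M2 *v hom B) = \<mu>2*c*t3v"
    using conic_shape[OF tri snz[unfolded t1v_def t2v_def t3v_def] C2] unfolding a_def b_def c_def t1v_def t2v_def t3v_def
    by blast
  have sym1: "transpose M1 = M1" using C1 by (simp add: is_isog_image_def)
  have sym2: "transpose M2 = M2" using C2 by (simp add: is_isog_image_def)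
  note sy1 = sym_form[OF sym1, of "hom B" "hom A"] sym_form[OF sym1, of "hom C" "hom A"] sym_form[OF sym1, of "hom C" "hom B"]
  note sy2 = sym_form[OF sym2, of "hom B" "hom A"] sym_form[OF sym2, of "hom C" "hom A"] sym_form[OF sym2, of "hom C" "hom B"]
  define x where "x = Ti *v X"
  define y where "y = Ti *v Y"
  define p where "p = Ti *v P"
  have Xx: "X = T *v x" using trimat_inv(1)[OF tri] by (simp add: x_def T_def Ti_def)
  have Yy: "Y = T *v y" using trimat_inv(1)[OF tri] by (simp add: y_def T_def Ti_def)
  have Pp: "P = T *v p" using trimat_inv(1)[OF tri] by (simp add: p_def T_def Ti_def)
  have ux: "u1*x$1 + u2*x$2 + u3*x$3 = 0"
    using X dot_T[of l1 A B C x] by (simp add: on_line_def Xx T_def u1_def u2_def u3_def algebra_simps)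
  have uy: "u1*y$1 + u2*y$2 + u3*y$3 = 0"
    using Y dot_T[of l1 A B C y] by (simp add: on_line_def Yy T_def u1_def u2_def u3_def algebra_simps)
  define Es where "Es = c*t3v*(y$1*x$2+y$2*x$1) + b*t2v*(y$1*x$3+y$3*x$1) + a*t1v*(y$2*x$3+y$3*x$2)"
  have "Y \<bullet> (M2 *v X) = 0" using conj by (simp add: conjugate_wrt_def)
  then have "\<mu>2 * Es = 0"
    unfolding Xx Yy T_def bil_T sh2 sy2 by (simp add: sh2 Es_def algebra_simps)
  moreover have "\<mu>2 \<noteq> 0"
  proof
    assume m0: "\<mu>2 = 0"
    define P0 where "P0 = T *v vector [1, 1, 0]"
    have "P0 \<bullet> (M2 *v P0) = 0"
      unfolding P0_def T_def bil_T sh2 sy2 by (simp add: sh2 m0)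
    moreover have P0nz: "P0 \<noteq> 0"
      using trimat_zero[OF tri, of "vector [1,1,0]"] by (auto simp: P0_def T_def vec_eq_iff forall_3)
    ultimately have "on_conic M2 P0" by (simp add: on_conic_def)
    then obtain Z where Z: "on_line Z l2" "proj_eq P0 (isog A B C Z)"
      using C2 unfolding is_isog_image_def by blast
    then obtain k where "P0 = k *\<^sub>R isog A B C Z" by (auto simp: proj_eq_def)
    then have "T *v vector [1, 1, 0] = T *v (k *\<^sub>R iso A B C (Ti *v Z))"
      by (simp add: P0_def isog_eq bary_def T_def Ti_def matrix_vector_mult_scaleR)
    then have "Ti *v (T *v vector [1, 1, 0]) = Ti *v (T *v (k *\<^sub>R iso A B C (Ti *v Z)))" by simp
    then have "(vector [1, 1, 0] :: real^3) = k *\<^sub>R iso A B C (Ti *v Z)"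
      using trimat_inv(2)[OF tri] by (simp add: T_def Ti_def)
    then have e: "1 = k * (a * (Ti *v Z)$2 * (Ti *v Z)$3)" "1 = k * (b * (Ti *v Z)$3 * (Ti *v Z)$1)"
      "0 = k * (c * (Ti *v Z)$1 * (Ti *v Z)$2)"
      by (auto simp: vec_eq_iff forall_3 iso_def a_def b_def c_def)
    have "k = 0 \<or> (Ti *v Z)$1 = 0 \<or> (Ti *v Z)$2 = 0" using e(3) abc by simp
    then show False using e(1,2) by auto
  qed
  ultimately have Es0: "Es = 0" by simp
  obtain k where k: "k \<noteq> 0" "M1 *v P = k *\<^sub>R l2" using pole by (auto simp: is_pole_def proj_eq_def)
  have e1: "T *v vector [1,0,0] = hom A" "T *v vector [0,1,0] = hom B" "T *v vector [0,0,1] = hom C"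
    by (simp_all add: T_def trimat_mv)
  have r1: "(T *v vector [1,0,0]) \<bullet> (M1 *v (T *v p)) = k * t1v"
    using k(2) by (simp add: e1 Pp[symmetric] t1v_def inner_commute)
  have r2: "(T *v vector [0,1,0]) \<bullet> (M1 *v (T *v p)) = k * t2v"
    using k(2) by (simp add: e1 Pp[symmetric] t2v_def inner_commute)
  have r3: "(T *v vector [0,0,1]) \<bullet> (M1 *v (T *v p)) = k * t3v"
    using k(2) by (simp add: e1 Pp[symmetric] t3v_def inner_commute)
  have q1: "\<mu>1 * (c*u3*p$2 + b*u2*p$3) = k * t1v"
    using r1 unfolding T_def bil_T sh1 sy1 by (simp add: sh1 algebra_simps)
  have q2: "\<mu>1 * (c*u3*p$1 + a*u1*p$3) = k * t2v"
    using r2 unfolding T_def bil_T sh1 sy1 by (simp add: sh1 algebra_simps)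
  have q3: "\<mu>1 * (b*u2*p$1 + a*u1*p$2) = k * t3v"
    using r3 unfolding T_def bil_T sh1 sy1 by (simp add: sh1 algebra_simps)
  define Ek where "Ek = c*(b*u2*p$1 + a*u1*p$2)*(y$1*x$2+y$2*x$1) + b*(c*u3*p$1 + a*u1*p$3)*(y$1*x$3+y$3*x$1)
          + a*(c*u3*p$2 + b*u2*p$3)*(y$2*x$3+y$3*x$2)"
  have "k * Es = c*(k*t3v)*(y$1*x$2+y$2*x$1) + b*(k*t2v)*(y$1*x$3+y$3*x$1) + a*(k*t1v)*(y$2*x$3+y$3*x$2)"
    unfolding Es_def by (simp only: distrib_left mult_ac)
  also have "\<dots> = c*(\<mu>1 * (b*u2*p$1 + a*u1*p$2))*(y$1*x$2+y$2*x$1) + b*(\<mu>1 * (c*u3*p$1 + a*u1*p$3))*(y$1*x$3+y$3*x$1)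
     + a*(\<mu>1 * (c*u3*p$2 + b*u2*p$3))*(y$2*x$3+y$3*x$2)"
    by (simp only: q1 q2 q3)
  also have "\<dots> = \<mu>1 * Ek" unfolding Ek_def by (simp only: distrib_left mult_ac)
  finally have Ek: "\<mu>1 * Ek = 0" using Es0 by simp
  have "\<mu>1 \<noteq> 0" using q1 k(1) snz(1) by auto
  then have E0: "Ek = 0" using Ek by simp
  have Fexp: "cross3 (iso A B C x) (iso A B C y) \<bullet> p = ((b*x$3*x$1)*(c*y$1*y$2) - (c*x$1*x$2)*(b*y$3*y$1))*p$1 + ((c*x$1*x$2)*(a*y$2*y$3) - (a*x$2*x$3)*(c*y$1*y$2))*p$2
              + ((a*x$2*x$3)*(b*y$3*y$1) - (b*x$3*x$1)*(a*y$2*y$3))*p$3"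
    by (simp add: cross3_def inner_vec_def sum_3 iso_def a_def b_def c_def)
  have F0: "cross3 (iso A B C x) (iso A B C y) \<bullet> p = 0"
  proof -
    have "2*u1*(cross3 (iso A B C x) (iso A B C y) \<bullet> p) = 0"
      using alg_key_poly[where a=a and b=b and c=c and px="p$1" and py="p$2" and pz="p$3", OF ux uy] E0
      unfolding Fexp Ek_def by simp
    then show ?thesis using unz(1) by simp
  qed
  have "isog A B C X = T *v iso A B C x" by (simp add: isog_eq bary_def T_def Ti_def x_def)
  moreover have "isog A B C Y = T *v iso A B C y" by (simp add: isog_eq bary_def T_def Ti_def y_def)
  ultimately show "on_join (isog A B C X) (isog A B C Y) P"
    using F0 by (simp add: on_join_def Pp cross_T)
qed

end
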